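(* Assume $\beta^2\le\frac43-\mu$ for a constant $\mu>0$. There is $a_0>0$ depending only on $S$ and $\mu$ such that for all $0<a\le\min(a_0,\lambda/2)$ there is a constant $c$ depending only on $a$ and $\mu$ with the following property. For every $t\ge0$, if $x^s_{3N/4}(t)>0$ and $$\mathbb E\left[\Phi(x^s(t+1))-\Phi(x^s(t))\,\middle|\,x^s(t)\right]\ge-\frac{1}{36}\frac aN\Phi(x^s(t)),$$ then either $\Phi(x^s(t))<\frac{3\mu}{32}\Psi(x^s(t))$ or $\Gamma(x^s(t))<cN$.
   Context: Weighted balls into weighted bins: $n$ bins with positive integer weights $N_1,\dots,N_n$, $N=\sum_iN_i$; $\mathcal D$ on $[n]$ is $(\alpha,\beta)$-biased, i.e. $\frac{N_i}{\alpha N}\le\Pr_{\mathcal D}[i]\le\frac{\beta N_i}{N}$, $\alpha,\beta\ge1$. Ball weights $w(t)$ are i.i.d. from $\mathcal W$ on $[0,\infty)$ with $\mathbb E[\mathcal W]=1$ and $M(z)=\mathbb E[e^{z\mathcal W}]$ finite at $z=\lambda$ for some $\lambda>0$; $S\ge1$ is a constant with $M''(z)\le2S$ for all $|z|<\lambda/2$. Each round two bins are sampled independently from $\mathcal D$ and the ball goes to the sampled bin with smaller value $v_i(t-1)=w_i(t-1)/N_i$. Slot formulation: bin $i$ consists of $N_i$ unit slots; the normalized slot vector $x^s(t)\in\mathbb R^N$ has, for each slot of bin $i$, the entry $v_i(t)-\frac1N\sum_{t'\le t}w(t')$, indexed so that $x^s_1(t)\ge\dots\ge x^s_N(t)$;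 fractional indices are rounded up. $\Phi(y)=\sum_je^{ay_j}$, $\Psi(y)=\sum_je^{-ay_j}$, $\Gamma=\Phi+\Psi$. *)

theory Defs
  imports "HOL-Probability.Probability"
begin

text \<open>Bins are indexed 0..n-1; bin i has positive integer weight Nw i (= N_i).
  A state is a load vector w (w i = w_i(t)); the total weight thrown so far is the sum of loads.\<close>

definition total_slots :: "nat \<Rightarrow> (nat \<Rightarrow> nat) \<Rightarrow> nat" where
  "total_slots n Nw = (\<Sum>i<n. Nw i)"

definition total_load :: "nat \<Rightarrow> (nat \<Rightarrow> real) \<Rightarrow> real" where
  "total_load n w = (\<Sum>i<n. w i)"

definition bin_value :: "(nat \<Rightarrow> nat) \<Rightarrow> (nat \<Rightarrow> real) \<Rightarrow> nat \<Rightarrow> real" where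
  "bin_value Nw w i = w i / real (Nw i)"

definition slot_vec :: "nat \<Rightarrow> (nat \<Rightarrow> nat) \<Rightarrow> (nat \<Rightarrow> real) \<Rightarrow> real list" where
  "slot_vec n Nw w = rev (sort (concat (map (\<lambda>i. replicate (Nw i)
      (bin_value Nw w i - total_load n w / real (total_slots n Nw))) [0..<n])))"

text \<open>1-based indexing of the sorted slot vector.\<close>
definition slot_entry :: "real list \<Rightarrow> nat \<Rightarrow> real" where
  "slot_entry xs k = xs ! (k - 1)"

definition Phi :: "real \<Rightarrow> real list \<Rightarrow> real" where
  "Phi a ys = sum_list (map (\<lambda>y. exp (a * y)) ys)"

definition Psi :: "real \<Rightarrow> real list \<Rightarrow> real" where
  "Psi a ys = sum_list (map (\<lambda>y. exp (- a * y)) ys)"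

definition Gamma :: "real \<Rightarrow> real list \<Rightarrow> real" where
  "Gamma a ys = Phi a ys + Psi a ys"

definition biased :: "nat \<Rightarrow> (nat \<Rightarrow> nat) \<Rightarrow> nat pmf \<Rightarrow> real \<Rightarrow> real \<Rightarrow> bool" where
  "biased n Nw D \<alpha> \<beta> \<longleftrightarrow> set_pmf D \<subseteq> {..<n} \<and>
     (\<forall>i<n. real (Nw i) / (\<alpha> * real (total_slots n Nw)) \<le> pmf D i \<and>
            pmf D i \<le> \<beta> * real (Nw i) / real (total_slots n Nw))"

definition allocate :: "(nat \<Rightarrow> nat) \<Rightarrow> (nat \<Rightarrow> real) \<Rightarrow> nat \<Rightarrow> nat \<Rightarrow> nat" where
  "allocate Nw w i j = (if bin_value Nw w i \<le> bin_value Nw w j then i else j)"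

definition add_ball :: "(nat \<Rightarrow> real) \<Rightarrow> nat \<Rightarrow> real \<Rightarrow> (nat \<Rightarrow> real)" where
  "add_ball w k \<omega> = w(k := w k + \<omega>)"

definition mgf :: "real measure \<Rightarrow> real \<Rightarrow> real" where
  "mgf Wd z = (\<integral>\<omega>. exp (z * \<omega>) \<partial>Wd)"

text \<open>E[ Phi(x^s(t+1)) - Phi(x^s(t)) | state at time t = w ].\<close>
definition Phi_drift :: "real \<Rightarrow> nat \<Rightarrow> (nat \<Rightarrow> nat) \<Rightarrow> nat pmf \<Rightarrow> real measure
     \<Rightarrow> (nat \<Rightarrow> real) \<Rightarrow> real" where
  "Phi_drift a n Nw D Wd w =
     (\<Sum>i<n. \<Sum>j<n. pmf D i * pmf D j *
        (\<integral>\<omega>. Phi a (slot_vec n Nw (add_ball w (allocate Nw w i j) \<omega>))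
              - Phi a (slot_vec n Nw w) \<partial>Wd))"

end

theory Submission
  imports Defs
begin


lemma pow_le_exp: fixes x::real assumes "x \<ge> 0" shows "x ^ j \<le> (real j) ^ j * exp x"
proof (cases "j = 0")
  case True then show ?thesis using assms by simp
next
  case False
  have "(x / real j) ^ j \<le> (1 + x / real j) ^ j"
    using assms by (intro power_mono) auto
  also have "\<dots> \<le> exp x" using False assms
    by (intro exp_ge_one_plus_x_over_n_power_n) auto
  finally have "x ^ j / real j ^ j \<le> exp x" by (simp add: power_divide)
  then show ?thesis using False by (simp add: field_simps)
qed

lemma exp_quad_bound: fixes x::real shows "\<bar>exp x - 1 - x\<bar> \<le> x^2 * exp \<bar>x\<bar> / 2"
proof -
  obtain t where t: "\<bar>t\<bar> \<le> \<bar>x\<bar>" "exp x = (\<Sum>m<2. (x ^ m) / fact m) + (exp t / fact 2) * x ^ 2"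
    using Maclaurin_exp_le[of x 2] by blast
  have e: "exp x - 1 - x = exp t / 2 * x^2" using t(2) by (simp add: numeral_2_eq_2)
  have "exp t \<le> exp \<bar>x\<bar>" using t(1) by simp
  then have "exp t * x^2 \<le> exp \<bar>x\<bar> * x^2" by (rule mult_right_mono) simp
  moreover have "\<bar>exp x - 1 - x\<bar> = exp t * x^2 / 2" unfolding e by simp
  ultimately show ?thesis by (simp add: mult.commute)
qed

lemma aux: "(w::real)^j * A * ((h*w)^2 * B / 2) = h^2/2 * (w^(j+2) * (A*B))"
  by (simp add: power_add power_mult_distrib power2_eq_square)

locale wdloc = prob_space Wd for Wd :: "real measure" +
  fixes lam :: real
  assumes sets_Wd: "sets Wd = sets borel"
    and nonneg: "AE \<omega> in Wd. \<omega> \<ge> 0"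
    and int_lam: "integrable Wd (\<lambda>\<omega>. exp (lam * \<omega>))"
    and lam_pos: "lam > 0"
begin

lemma meas: "f \<in> borel_measurable borel \<Longrightarrow> f \<in> borel_measurable Wd"
  by (subst measurable_cong_sets[OF sets_Wd refl]) auto

lemma int_mom: assumes "c < lam" shows "integrable Wd (\<lambda>\<omega>. \<omega> ^ j * exp (c * \<omega>))"
proof -
  define d where "d = lam - c"
  have d: "d > 0" using assms d_def by simp
  show ?thesis
  proof (rule Bochner_Integration.integrable_bound)
    show "integrable Wd (\<lambda>\<omega>. (real j)^j / d^j * exp (lam * \<omega>))"
      using int_lam by simp
    show "(\<lambda>\<omega>. \<omega> ^ j * exp (c * \<omega>)) \<in> borel_measurable Wd"
      by (intro meas) measurable
    show "AE \<omega> in Wd. norm (\<omega> ^ j * exp (c * \<omega>)) \<le> norm ((real j)^j / d^j * exp (lam * \<omega>))"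
      using nonneg
    proof eventually_elim
      case (elim \<omega>)
      have "(d * \<omega>) ^ j \<le> (real j) ^ j * exp (d * \<omega>)" using elim d by (intro pow_le_exp) auto
      then have "\<omega> ^ j \<le> (real j) ^ j / d^j * exp (d * \<omega>)" using d
        by (simp add: power_mult_distrib field_simps)
      then have "\<omega> ^ j * exp (c * \<omega>) \<le> (real j) ^ j / d^j * exp (d * \<omega>) * exp (c * \<omega>)"
        by (intro mult_right_mono) auto
      also have "\<dots> = (real j) ^ j / d^j * exp (lam * \<omega>)"
      proof -
        have "exp (d * \<omega>) * exp (c * \<omega>) = exp (lam * \<omega>)"
          unfolding exp_add[symmetric] d_def by (simp add: algebra_simps)
        then show ?thesis by (simp add: mult.assoc)
      qed
      finally show ?case using elim d by (simp add: abs_mult abs_of_pos)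
    qed
  qed
qed

lemma int_exp: assumes "c \<le> lam" shows "integrable Wd (\<lambda>\<omega>. exp (c * \<omega>))"
proof (rule Bochner_Integration.integrable_bound)
  show "integrable Wd (\<lambda>\<omega>. 1 + exp (lam * \<omega>))" using int_lam by simp
  show "(\<lambda>\<omega>. exp (c * \<omega>)) \<in> borel_measurable Wd" by (intro meas) measurable
  show "AE \<omega> in Wd. norm (exp (c * \<omega>)) \<le> norm (1 + exp (lam * \<omega>))"
    using nonneg
  proof eventually_elim
    case (elim \<omega>)
    have "exp (c*\<omega>) \<le> exp (lam * \<omega>)" using elim assms by (simp add: mult_right_mono)
    moreover have "norm (exp (c * \<omega>)) = exp (c * \<omega>)" by simp
    moreover have "norm (1 + exp (lam * \<omega>)) = 1 + exp (lam * \<omega>)"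
      by (smt (verit) exp_gt_zero real_norm_def)
    ultimately show ?case by linarith
  qed
qed

definition F :: "nat \<Rightarrow> real \<Rightarrow> real" where
  "F j z = (\<integral>\<omega>. \<omega> ^ j * exp (z * \<omega>) \<partial>Wd)"

lemma F_deriv: assumes "z < lam" shows "(F j has_real_derivative F (Suc j) z) (at z)"
proof -
  define d where "d = (lam - z) / 2"
  have d: "d > 0" "z + d < lam" using assms by (auto simp: d_def field_simps)
  define C where "C = F (j+2) (z + d) / 2"
  have bound: "\<bar>F j y - F j z - (y - z) * F (Suc j) z\<bar> \<le> C * (y - z)^2"
    if "\<bar>y - z\<bar> < d" for y
  proof -
    define h where "h = y - z"
    have yl: "y < lam" using that d by (auto simp: abs_less_iff)
    have i1: "integrable Wd (\<lambda>\<omega>. \<omega> ^ j * exp (y * \<omega>))" using int_mom yl by blast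
    have i2: "integrable Wd (\<lambda>\<omega>. \<omega> ^ j * exp (z * \<omega>))" using int_mom assms by blast
    have i3: "integrable Wd (\<lambda>\<omega>. \<omega> ^ Suc j * exp (z * \<omega>))" using int_mom assms by blast
    have i4: "integrable Wd (\<lambda>\<omega>. \<omega> ^ (j+2) * exp ((z+d) * \<omega>))" using int_mom d by blast
    let ?f = "\<lambda>\<omega>. \<omega> ^ j * exp (y * \<omega>) - \<omega> ^ j * exp (z * \<omega>) - h * (\<omega> ^ Suc j * exp (z * \<omega>))"
    have eq: "F j y - F j z - h * F (Suc j) z = (\<integral>\<omega>. ?f \<omega> \<partial>Wd)"
      unfolding F_def using i1 i2 i3 by simp
    have "\<bar>\<integral>\<omega>. ?f \<omega> \<partial>Wd\<bar> \<le> (\<integral>\<omega>. \<bar>?f \<omega>\<bar> \<partial>Wd)"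
      by (rule integral_abs_bound)
    also have "\<dots> \<le> (\<integral>\<omega>. h^2 / 2 * (\<omega> ^ (j+2) * exp ((z+d) * \<omega>)) \<partial>Wd)"
    proof (rule integral_mono_AE)
      show "integrable Wd (\<lambda>\<omega>. \<bar>?f \<omega>\<bar>)" using i1 i2 i3 by auto
      show "integrable Wd (\<lambda>\<omega>. h^2 / 2 * (\<omega> ^ (j+2) * exp ((z+d) * \<omega>)))" using i4 by auto
      show "AE \<omega> in Wd. \<bar>?f \<omega>\<bar> \<le> h^2 / 2 * (\<omega> ^ (j+2) * exp ((z+d) * \<omega>))"
        using nonneg
      proof eventually_elim
        case (elim \<omega>)
        have ee: "exp (y*\<omega>) = exp(z*\<omega>)*exp(h*\<omega>)"
          unfolding exp_add[symmetric] h_def by (simp add: algebra_simps)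
        have fe: "?f \<omega> = \<omega> ^ j * exp (z * \<omega>) * (exp (h*\<omega>) - 1 - h * \<omega>)"
          unfolding ee by (simp add: algebra_simps)
        have hw: "\<bar>h * \<omega>\<bar> \<le> d * \<omega>" using elim that
          by (simp add: h_def abs_mult mult_right_mono)
        have "\<bar>?f \<omega>\<bar> = \<omega> ^ j * exp (z * \<omega>) * \<bar>exp (h*\<omega>) - 1 - h * \<omega>\<bar>"
          unfolding fe abs_mult using elim by simp
        also have "\<dots> \<le> \<omega> ^ j * exp (z * \<omega>) * ((h*\<omega>)^2 * exp \<bar>h*\<omega>\<bar> / 2)"
          using elim by (intro mult_left_mono exp_quad_bound) auto
        also have "\<dots> \<le> \<omega> ^ j * exp (z * \<omega>) * ((h*\<omega>)^2 * exp (d * \<omega>) / 2)"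
          using elim hw by (intro mult_left_mono divide_right_mono) auto
        also have "\<dots> = h^2 / 2 * (\<omega> ^ (j+2) * exp ((z+d) * \<omega>))"
        proof -
          have e2: "exp ((z+d)*\<omega>) = exp(z*\<omega>)*exp(d*\<omega>)" by (simp add: distrib_right exp_add)
          show ?thesis unfolding e2 by (rule aux)
        qed
        finally show ?case .
      qed
    qed
    also have "\<dots> = C * h^2" unfolding C_def F_def by simp
    finally show ?thesis using eq by (simp add: h_def)
  qed
  have "((\<lambda>y. (F j y - F j z) / (y - z) - F (Suc j) z) \<longlongrightarrow> 0) (at z)"
  proof (rule Lim_null_comparison)
    show "((\<lambda>y. C * \<bar>y - z\<bar>) \<longlongrightarrow> 0) (at z)"
      by (intro tendsto_eq_intros) auto
    have "eventually (\<lambda>y. \<bar>y - z\<bar> < d \<and> y \<noteq> z) (at z)"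
      using d(1) by (auto simp: eventually_at dist_real_def intro!: exI[of _ d])
    then show "eventually (\<lambda>y. norm ((F j y - F j z) / (y - z) - F (Suc j) z) \<le> C * \<bar>y - z\<bar>) (at z)"
    proof eventually_elim
      case (elim y)
      have ne: "y - z \<noteq> 0" using elim by simp
      have "(F j y - F j z) / (y - z) - F (Suc j) z = (F j y - F j z - (y - z) * F (Suc j) z) / (y - z)"
        using ne by (simp add: field_simps)
      also have "\<bar>\<dots>\<bar> \<le> C * (y-z)^2 / \<bar>y - z\<bar>"
        using bound[of y] elim ne by (simp add: divide_right_mono)
      also have "\<dots> = C * \<bar>y - z\<bar>" 
      proof -
        have "(y-z)^2 = \<bar>y-z\<bar>*\<bar>y-z\<bar>" by (simp add: power2_eq_square)
        moreover have "\<bar>y-z\<bar> \<noteq> 0" using ne by simp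
        ultimately show ?thesis by (metis mult.assoc nonzero_mult_div_cancel_right)
      qed
      finally show ?case by simp
    qed
  qed
  then have "((\<lambda>y. (F j y - F j z) / (y - z)) \<longlongrightarrow> F (Suc j) z) (at z)"
    by (simp add: LIM_zero_iff)
  then show ?thesis by (simp add: has_field_derivative_iff)
qed


lemma mgf_F: "mgf Wd = F 0" by (simp add: fun_eq_iff mgf_def F_def)

lemma deriv1: assumes "z < lam" shows "deriv (mgf Wd) z = F 1 z"
  using F_deriv[OF assms, of 0] by (simp add: mgf_F DERIV_imp_deriv)

lemma deriv2: assumes "z < lam" shows "deriv (deriv (mgf Wd)) z = F 2 z"
proof -
  have "(deriv (mgf Wd) has_real_derivative F 2 z) (at z)"
  proof (rule has_field_derivative_transform_within_open[of "F 1" _ _ "{..<lam}"])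
    show "(F 1 has_real_derivative F 2 z) (at z)" using F_deriv[OF assms, of 1] by (simp add: numeral_2_eq_2)
  qed (use assms deriv1 in auto)
  then show ?thesis by (rule DERIV_imp_deriv)
qed

lemma F00: "F 0 0 = 1" by (simp add: F_def prob_space)

lemma mgf_bounds:
  assumes hyp: "\<forall>z. \<bar>z\<bar> < lam / 2 \<longrightarrow> deriv (deriv (mgf Wd)) z \<le> 2 * S"
    and E1: "(\<integral>\<omega>. \<omega> \<partial>Wd) = 1"
    and h: "0 < h" "h \<le> lam / 2"
  shows "mgf Wd h \<le> 1 + h + S * h^2" "mgf Wd (-h) \<le> 1 - h + S * h^2"
proof -
  have F10: "F 1 0 = 1" using E1 by (simp add: F_def)
  have F2b: "F 2 t \<le> 2 * S" if "\<bar>t\<bar> < lam/2" for t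
    using hyp that deriv2[of t] lam_pos by auto
  have D: "DERIV (F m) t :> F (Suc m) t" if "t \<le> lam/2" for m t
    using F_deriv[of t m] that lam_pos by auto
  obtain t where t: "0 < t" "t < h" "F 0 h = (\<Sum>m<2. F m 0 / fact m * h ^ m) + F 2 t / fact 2 * h ^ 2"
    using Maclaurin[of h 2 F "F 0"] h D by auto
  have "F 2 t \<le> 2 * S" using t h by (intro F2b) auto
  then have "F 2 t / 2 * h^2 \<le> 2 * S / 2 * h^2" by (intro mult_right_mono divide_right_mono) auto
  then show "mgf Wd h \<le> 1 + h + S * h^2"
    using t(3) F00 F10 by (simp add: mgf_F numeral_2_eq_2)
  obtain t where t: "-h < t" "t < 0" "F 0 (-h) = (\<Sum>m<2. F m 0 / fact m * (-h) ^ m) + F 2 t / fact 2 * (-h) ^ 2"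
    using Maclaurin_minus[of "-h" 2 F "F 0"] h D by auto
  have "F 2 t \<le> 2 * S" using t h by (intro F2b) auto
  then have "F 2 t / 2 * h^2 \<le> 2 * S / 2 * h^2" by (intro mult_right_mono divide_right_mono) auto
  then show "mgf Wd (-h) \<le> 1 - h + S * h^2"
    using t(3) F00 F10 by (simp add: mgf_F numeral_2_eq_2)
qed

end



definition yv :: "nat \<Rightarrow> (nat \<Rightarrow> nat) \<Rightarrow> (nat \<Rightarrow> real) \<Rightarrow> nat \<Rightarrow> real" where
  "yv n Nw w i = bin_value Nw w i - total_load n w / real (total_slots n Nw)"

lemma slot_vec_alt: "slot_vec n Nw w = rev (sort (concat (map (\<lambda>i. replicate (Nw i) (yv n Nw w i)) [0..<n])))"
  by (simp add: slot_vec_def yv_def)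

lemma sum_list_map_mset: "mset xs = mset ys \<Longrightarrow> sum_list (map f xs) = sum_list (map (f::_\<Rightarrow>real) ys)"
  by (metis mset_map sum_mset_sum_list)

lemma sum_list_concat': "sum_list (concat xss) = sum_list (map sum_list (xss::real list list))"
  by (induct xss) auto

lemma sum_slot: "sum_list (map f (slot_vec n Nw w)) = (\<Sum>i<n. real (Nw i) * f (yv n Nw w i))"
proof -
  have "sum_list (map f (slot_vec n Nw w)) = sum_list (map f (concat (map (\<lambda>i. replicate (Nw i) (yv n Nw w i)) [0..<n])))"
    unfolding slot_vec_alt by (rule sum_list_map_mset) simp
  also have "\<dots> = sum_list (map (\<lambda>i. real (Nw i) * f (yv n Nw w i)) [0..<n])"
    by (simp add: map_concat sum_list_concat' comp_def sum_list_replicate)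
  also have "\<dots> = (\<Sum>i<n. real (Nw i) * f (yv n Nw w i))"
    by (metis sum_set_upt_conv_sum_list_nat atLeast_upt)
  finally show ?thesis .
qed

lemma length_slot: "length (slot_vec n Nw w) = total_slots n Nw"
  by (simp add: slot_vec_def total_slots_def length_concat comp_def sum_list_sum_nth lessThan_atLeast0)

lemma sorted_slot: "i \<le> j \<Longrightarrow> j < length (slot_vec n Nw w) \<Longrightarrow> slot_vec n Nw w ! j \<le> slot_vec n Nw w ! i"
proof -
  assume a: "i \<le> j" "j < length (slot_vec n Nw w)"
  have "sorted_wrt (\<ge>) (slot_vec n Nw w)"
    unfolding slot_vec_def sorted_wrt_rev by simp
  then show ?thesis using a
    by (cases "i = j") (auto simp: sorted_wrt_iff_nth_less)
qed

lemma sum_list_nth: "sum_list (map f xs) = (\<Sum>j<length xs. f (xs ! j))"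
  by (simp add: sum_list_sum_nth lessThan_atLeast0)


lemma load_add: "k < n \<Longrightarrow> total_load n (add_ball w k \<omega>) = total_load n w + \<omega>"
proof -
  assume k: "k < n"
  have "(\<Sum>i<n. (add_ball w k \<omega>) i) = (\<Sum>i<n. w i + (if i = k then \<omega> else 0))"
    by (rule sum.cong) (auto simp: add_ball_def)
  also have "\<dots> = (\<Sum>i<n. w i) + \<omega>" using k by (simp add: sum.distrib)
  finally show ?thesis by (simp add: total_load_def)
qed

lemma yv_add: "k < n \<Longrightarrow> yv n Nw (add_ball w k \<omega>) i
   = yv n Nw w i - \<omega> / real (total_slots n Nw) + (if i = k then \<omega> / real (Nw k) else 0)"
proof -
  assume k: "k < n"
  have L: "total_load n (add_ball w k \<omega>) = total_load n w + \<omega>" using load_add k by blast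
  show ?thesis unfolding yv_def L
    by (auto simp: bin_value_def add_ball_def add_divide_distrib diff_divide_distrib)
qed

lemma Phi_slot: "Phi a (slot_vec n Nw w) = (\<Sum>i<n. real (Nw i) * exp (a * yv n Nw w i))"
  by (simp add: Phi_def sum_slot)

lemma Psi_slot: "Psi a (slot_vec n Nw w) = (\<Sum>i<n. real (Nw i) * exp (- a * yv n Nw w i))"
  by (simp add: Psi_def sum_slot)

lemma Phi_add: assumes k: "k < n"
  shows "Phi a (slot_vec n Nw (add_ball w k \<omega>)) = exp (- (a / real (total_slots n Nw)) * \<omega>) *
     (Phi a (slot_vec n Nw w) + real (Nw k) * exp (a * yv n Nw w k) * (exp ((a / real (Nw k)) * \<omega>) - 1))"
proof -
  let ?N = "real (total_slots n Nw)"
  let ?E = "exp (- (a / ?N) * \<omega>)"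
  let ?X = "exp (a * yv n Nw w k) * (exp ((a / real (Nw k)) * \<omega>) - 1)"
  have e: "exp (a * yv n Nw (add_ball w k \<omega>) i) = ?E * (exp (a * yv n Nw w i) + (if i = k then ?X else 0))" for i
  proof -
    have eq: "a * yv n Nw (add_ball w k \<omega>) i = - (a / ?N) * \<omega> + a * yv n Nw w i + (if i = k then (a / real (Nw k)) * \<omega> else 0)"
      using k by (simp add: yv_add algebra_simps)
    show ?thesis unfolding eq exp_add by (cases "i = k") (simp_all add: algebra_simps)
  qed
  have "Phi a (slot_vec n Nw (add_ball w k \<omega>)) = (\<Sum>i<n. ?E * (real (Nw i) * exp (a * yv n Nw w i) + (if i = k then real (Nw k) * ?X else 0)))"
    unfolding Phi_slot e by (rule sum.cong) (auto simp: algebra_simps)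
  also have "\<dots> = ?E * ((\<Sum>i<n. real (Nw i) * exp (a * yv n Nw w i)) + real (Nw k) * ?X)"
    using k by (simp add: sum_distrib_left[symmetric] sum.distrib)
  finally show ?thesis by (simp add: Phi_slot mult.assoc)
qed




lemma Phi_nonneg: "Phi a xs \<ge> 0"
  unfolding Phi_def by (induct xs) auto

context wdloc begin

lemma bin_drift:
  assumes hyp: "\<forall>z. \<bar>z\<bar> < lam / 2 \<longrightarrow> deriv (deriv (mgf Wd)) z \<le> 2 * S"
    and E1: "(\<integral>\<omega>. \<omega> \<partial>Wd) = 1"
    and a: "0 < a" "a \<le> lam / 2" and k: "k < n" "Nw k > 0" and N: "total_slots n Nw > 0"
    and S: "S \<ge> 0"
  shows "(\<integral>\<omega>. Phi a (slot_vec n Nw (add_ball w k \<omega>)) - Phi a (slot_vec n Nw w) \<partial>Wd)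
     \<le> - (a / real (total_slots n Nw)) * (1 - S * a) * Phi a (slot_vec n Nw w)
        + a * (1 + S * a) * exp (a * yv n Nw w k)"
proof -
  define P where "P = Phi a (slot_vec n Nw w)"
  define Nr where "Nr = real (total_slots n Nw)"
  define h where "h = a / Nr"
  define hk where "hk = a / real (Nw k)"
  define ek where "ek = exp (a * yv n Nw w k)"
  define X where "X = real (Nw k) * ek"
  have Nr: "Nr \<ge> 1" using N by (simp add: Nr_def)
  have Nk: "real (Nw k) \<ge> 1" using k by simp
  have P0: "P \<ge> 0" unfolding P_def by (rule Phi_nonneg)
  have X0: "X \<ge> 0" by (simp add: X_def ek_def)
  have hle: "h \<le> a" using a Nr by (simp add: h_def field_simps)
  have h: "0 < h" "h \<le> lam / 2" using a Nr hle by (auto simp: h_def simp del: divide_le_eq_numeral1 le_divide_eq_numeral1)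
  have hkle: "hk \<le> a" using a Nk by (simp add: hk_def field_simps)
  have hk: "0 < hk" "hk \<le> lam / 2" using a Nk k hkle by (auto simp: hk_def simp del: divide_le_eq_numeral1 le_divide_eq_numeral1)
  have feq: "(\<lambda>\<omega>. Phi a (slot_vec n Nw (add_ball w k \<omega>)) - Phi a (slot_vec n Nw w))
     = (\<lambda>\<omega>. P * exp ((-h) * \<omega>) + X * exp ((hk + -h) * \<omega>) - X * exp ((-h) * \<omega>) - P)"
  proof
    fix \<omega>
    show "Phi a (slot_vec n Nw (add_ball w k \<omega>)) - Phi a (slot_vec n Nw w)
      = P * exp ((-h) * \<omega>) + X * exp ((hk + -h) * \<omega>) - X * exp ((-h) * \<omega>) - P"
      unfolding Phi_add[OF k(1)] P_def[symmetric] distrib_right exp_add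
      by (simp add: h_def hk_def X_def ek_def Nr_def algebra_simps)
  qed
  define g where "g = (\<lambda>\<omega>. (exp ((-h) * \<omega>) - 1) * P + X * (exp (hk * \<omega>) - 1))"
  have ih: "integrable Wd (\<lambda>\<omega>. exp ((-h) * \<omega>))" using h lam_pos by (intro int_exp) auto
  have ihk: "integrable Wd (\<lambda>\<omega>. exp (hk * \<omega>))" using hk lam_pos by (intro int_exp) auto
  have ihk2: "integrable Wd (\<lambda>\<omega>. exp ((hk + -h) * \<omega>))" using hk h lam_pos by (intro int_exp) auto
  have "(\<integral>\<omega>. Phi a (slot_vec n Nw (add_ball w k \<omega>)) - Phi a (slot_vec n Nw w) \<partial>Wd) \<le> (\<integral>\<omega>. g \<omega> \<partial>Wd)"
    unfolding feq
  proof (rule integral_mono_AE)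
    show "integrable Wd (\<lambda>\<omega>. P * exp ((-h) * \<omega>) + X * exp ((hk + -h) * \<omega>) - X * exp ((-h) * \<omega>) - P)"
      using ih ihk2 by auto
    show "integrable Wd g" unfolding g_def using ih ihk by auto
    show "AE \<omega> in Wd. P * exp ((-h) * \<omega>) + X * exp ((hk + -h) * \<omega>) - X * exp ((-h) * \<omega>) - P \<le> g \<omega>"
      using nonneg
    proof eventually_elim
      case (elim \<omega>)
      define E where "E = exp ((-h) * \<omega>)"
      define Y where "Y = X * (exp (hk * \<omega>) - 1)"
      have E: "0 < E" "E \<le> 1" using elim h by (auto simp: E_def)
      have Y: "Y \<ge> 0" using X0 hk elim by (auto simp: Y_def)
      have "P * exp ((-h) * \<omega>) + X * exp ((hk + -h) * \<omega>) - X * exp ((-h) * \<omega>) - P = (E - 1) * P + E * Y"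
        unfolding E_def Y_def distrib_right exp_add by (simp add: algebra_simps)
      also have "\<dots> \<le> (E - 1) * P + Y" using E Y by (simp add: mult_left_le_one_le)
      also have "\<dots> = g \<omega>" by (simp add: g_def E_def Y_def)
      finally show ?case .
    qed
  qed
  also have "(\<integral>\<omega>. g \<omega> \<partial>Wd) = (mgf Wd (-h) - 1) * P + X * (mgf Wd hk - 1)"
    unfolding g_def mgf_def using ih ihk by (simp add: prob_space algebra_simps)
  also have "\<dots> \<le> (-h + S * h^2) * P + X * (hk + S * hk^2)"
  proof -
    have "mgf Wd (-h) \<le> 1 - h + S * h^2" using mgf_bounds(2)[OF hyp E1 h] .
    then have 1: "(mgf Wd (-h) - 1) * P \<le> (-h + S * h^2) * P" using P0 by (intro mult_right_mono) auto
    have "mgf Wd hk \<le> 1 + hk + S * hk^2" using mgf_bounds(1)[OF hyp E1 hk] .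
    then have 2: "X * (mgf Wd hk - 1) \<le> X * (hk + S * hk^2)" using X0 by (intro mult_left_mono) auto
    show ?thesis using 1 2 by simp
  qed
  also have "\<dots> \<le> - h * (1 - S * a) * P + a * (1 + S * a) * ek"
  proof -
    have "S * h^2 * P \<le> S * a * h * P"
    proof -
      have "h \<le> a" using a Nr by (simp add: h_def field_simps)
      then have "h * h \<le> a * h" using h by (intro mult_right_mono) auto
      then have "S * (h * h) * P \<le> S * (a * h) * P" using S P0 by (metis mult_left_mono mult_right_mono)
      then show ?thesis by (simp add: power2_eq_square mult.assoc)
    qed
    moreover have "X * hk = a * ek" using k by (simp add: X_def hk_def)
    moreover have "X * (S * hk^2) \<le> S * a * a * ek"
    proof -
      have "X * (S * hk^2) = S * a * a * ek / real (Nw k)" using k by (simp add: X_def hk_def power2_eq_square)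
      also have "\<dots> \<le> S * a * a * ek / 1"
        by (rule divide_left_mono) (use Nk S a in \<open>auto simp: ek_def\<close>)
      finally show ?thesis by simp
    qed
    ultimately show ?thesis by (simp add: algebra_simps)
  qed
  finally show ?thesis by (simp add: P_def h_def Nr_def ek_def)
qed

end



lemma sum_ind_lt: "q \<le> L \<Longrightarrow> (\<Sum>j<L. if j < q then (c::real) else 0) = real q * c"
proof -
  assume q: "q \<le> L"
  have "(\<Sum>j<L. if j < q then c else 0) = (\<Sum>j\<in>{..<L} \<inter> {j. j < q}. c)"
    by (simp add: sum.If_cases)
  also have "{..<L} \<inter> {j. j < q} = {..<q}" using q by auto
  finally show ?thesis by simp
qed

lemma cnt_bound:
  fixes xs :: "real list"
  assumes srt: "\<And>i j. i \<le> j \<Longrightarrow> j < length xs \<Longrightarrow> xs!j \<le> xs!i" and r: "1 \<le> r" "r \<le> length xs"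
  shows "(\<Sum>j<length xs. if xs!j > xs!(r-1) then 1 else 0 :: real) \<le> real (r - 1)"
proof -
  have "(\<Sum>j<length xs. if xs!j > xs!(r-1) then 1 else 0 :: real) \<le> (\<Sum>j<length xs. if j < r - 1 then 1 else 0)"
  proof (rule sum_mono)
    fix j assume j: "j \<in> {..<length xs}"
    show "(if xs!j > xs!(r-1) then 1 else 0 :: real) \<le> (if j < r - 1 then 1 else 0)"
    proof (cases "j < r - 1")
      case False
      then have "xs!j \<le> xs!(r-1)" using srt[of "r-1" j] j by auto
      then show ?thesis using False by auto
    qed auto
  qed
  also have "\<dots> = real (r - 1)" using r by (subst sum_ind_lt) auto
  finally show ?thesis .
qed

lemma phi_split:
  fixes xs :: "real list" and a :: real
  assumes srt: "\<And>i j. i \<le> j \<Longrightarrow> j < length xs \<Longrightarrow> xs!j \<le> xs!i" and r: "1 \<le> r" "r \<le> length xs"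
    and a: "a \<ge> 0"
  shows "(\<Sum>j<length xs. exp (a * xs!j)) \<ge>
     (\<Sum>j<length xs. max 0 (exp (a * xs!j) - exp (a * xs!(r-1)))) + real r * exp (a * xs!(r-1))"
proof -
  let ?Z = "exp (a * xs!(r-1))"
  have "(\<Sum>j<length xs. exp (a * xs!j)) = (\<Sum>j<length xs. max 0 (exp (a * xs!j) - ?Z) + min (exp (a * xs!j)) ?Z)"
    by (rule sum.cong) auto
  also have "\<dots> = (\<Sum>j<length xs. max 0 (exp (a * xs!j) - ?Z)) + (\<Sum>j<length xs. min (exp (a * xs!j)) ?Z)"
    by (simp add: sum.distrib)
  also have "(\<Sum>j<length xs. min (exp (a * xs!j)) ?Z) \<ge> (\<Sum>j<length xs. if j < r then ?Z else 0)"
  proof (rule sum_mono)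
    fix j assume j: "j \<in> {..<length xs}"
    show "(if j < r then ?Z else 0) \<le> min (exp (a * xs!j)) ?Z"
    proof (cases "j < r")
      case True
      then have "xs!(r-1) \<le> xs!j" using srt[of j "r-1"] r by auto
      then have "?Z \<le> exp (a * xs!j)" using a by (simp add: mult_left_mono)
      then show ?thesis using True by simp
    qed auto
  qed
  moreover have "(\<Sum>j<length xs. if j < r then ?Z else 0) = real r * ?Z" by (rule sum_ind_lt[OF r(2)])
  ultimately show ?thesis by linarith
qed

lemma tangent_sum:
  fixes u :: "nat \<Rightarrow> real"
  assumes "finite A" "A \<noteq> {}"
  shows "(\<Sum>j\<in>A. exp (u j)) \<ge> real (card A) * exp ((\<Sum>j\<in>A. u j) / real (card A))"
proof -
  define c where "c = (\<Sum>j\<in>A. u j) / real (card A)"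
  have cA: "real (card A) > 0" using assms by (simp add: card_gt_0_iff)
  have "exp (u j) \<ge> exp c * (1 + (u j - c))" for j
  proof -
    have "exp (u j) = exp c * exp (u j - c)" by (simp add: exp_diff)
    moreover have "exp (u j - c) \<ge> 1 + (u j - c)" by (rule exp_ge_add_one_self)
    ultimately show ?thesis by simp
  qed
  then have "(\<Sum>j\<in>A. exp (u j)) \<ge> (\<Sum>j\<in>A. exp c * (1 + (u j - c)))" by (intro sum_mono) auto
  also have "(\<Sum>j\<in>A. exp c * (1 + (u j - c))) = exp c * (real (card A) + (\<Sum>j\<in>A. u j) - real (card A) * c)"
    by (simp add: sum_distrib_left[symmetric] sum.distrib sum_subtractf algebra_simps)
  also have "\<dots> = real (card A) * exp c" using cA by (simp add: c_def)
  finally show ?thesis by (simp add: c_def)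
qed

lemma psi_bound:
  fixes xs :: "real list" and a :: real
  assumes srt: "\<And>i j. i \<le> j \<Longrightarrow> j < length xs \<Longrightarrow> xs!j \<le> xs!i"
    and r: "1 \<le> r" "r \<le> m" and m: "m < length xs" and kr: "2 * (length xs - m) \<le> r"
    and pos: "\<And>j. j < m \<Longrightarrow> xs!j > 0" and sum0: "(\<Sum>j<length xs. xs!j) = 0"
    and a: "a > 0" and z2: "xs!(r-1) > 0"
  shows "(\<Sum>j<length xs. exp (- a * xs!j)) \<ge> real (length xs - m) * exp (2 * a * xs!(r-1))"
proof -
  define L where "L = length xs"
  define k where "k = L - m"
  define z2 where "z2 = xs!(r-1)"
  have k: "k \<ge> 1" "card {m..<L} = k" using m by (auto simp: k_def L_def)
  have split: "(\<Sum>j<L. f j) = (\<Sum>j<m. f j) + (\<Sum>j\<in>{m..<L}. f j)" for f :: "nat \<Rightarrow> real"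
    using m by (simp add: L_def lessThan_atLeast0 sum.atLeastLessThan_concat)
  have top: "(\<Sum>j<m. xs!j) \<ge> real r * z2"
  proof -
    have "(\<Sum>j<m. xs!j) \<ge> (\<Sum>j<m. if j < r then z2 else 0)"
    proof (rule sum_mono)
      fix j assume j: "j \<in> {..<m}"
      show "(if j < r then z2 else 0) \<le> xs!j"
      proof (cases "j < r")
        case True then show ?thesis using srt[of j "r-1"] r m by (auto simp: z2_def)
      next
        case False then show ?thesis using pos[of j] j by auto
      qed
    qed
    also have "(\<Sum>j<m. if j < r then z2 else 0) = real r * z2" by (rule sum_ind_lt[OF r(2)])
    finally show ?thesis by simp
  qed
  have bot: "(\<Sum>j\<in>{m..<L}. - a * xs!j) = a * (\<Sum>j<m. xs!j)"
  proof -
    have "(\<Sum>j<m. xs!j) + (\<Sum>j\<in>{m..<L}. xs!j) = 0" using split[of "\<lambda>j. xs!j"] sum0 by (simp add: L_def)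
    moreover have "(\<Sum>j\<in>{m..<L}. - a * xs!j) = - a * (\<Sum>j\<in>{m..<L}. xs!j)" by (simp add: sum_distrib_left)
    moreover have "(\<Sum>j\<in>{m..<L}. xs!j) = - (\<Sum>j<m. xs!j)" using calculation(1) by linarith
    ultimately show ?thesis by simp
  qed
  have "(\<Sum>j<L. exp (- a * xs!j)) \<ge> (\<Sum>j\<in>{m..<L}. exp (- a * xs!j))"
    using split[of "\<lambda>j. exp (- a * xs!j)"] by (simp add: sum_nonneg)
  moreover have "(\<Sum>j\<in>{m..<L}. exp (- a * xs!j)) \<ge> real k * exp ((\<Sum>j\<in>{m..<L}. - a * xs!j) / real k)"
    using tangent_sum[of "{m..<L}" "\<lambda>j. - a * xs!j"] m k by (auto simp: L_def)
  moreover have "exp ((\<Sum>j\<in>{m..<L}. - a * xs!j) / real k) \<ge> exp (2 * a * z2)"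
  proof -
    have kp: "real k > 0" using k by simp
    have "2 * a * z2 * real k \<le> a * z2 * real r"
    proof -
      have "real (2 * k) \<le> real r" using kr by (simp only: of_nat_le_iff k_def L_def)
      then have "2 * real k \<le> real r" by simp
      then show ?thesis using a z2 by (simp add: z2_def mult_left_mono mult.assoc[symmetric])
    qed
    also have "\<dots> \<le> a * (\<Sum>j<m. xs!j)" using top a by (simp add: mult_left_mono mult.commute mult.left_commute)
    finally have "2 * a * z2 \<le> a * (\<Sum>j<m. xs!j) / real k" using kp by (simp add: field_simps)
    then show ?thesis using bot by simp
  qed
  ultimately have "(\<Sum>j<L. exp (- a * xs!j)) \<ge> real k * exp (2 * a * z2)"
    using k by (smt (verit) mult_left_mono of_nat_0_le_iff)
  then show ?thesis by (simp add: L_def k_def z2_def)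
qed




definition cc :: "real \<Rightarrow> real" where
  "cc \<mu> = (1 + 32 / (3 * \<mu>)) * (63 / 20) * (63 * 256 / (60 * \<mu>)) + 1"

lemma arith_final:
  fixes P Q G Z Nr a e \<mu> Dr :: real
  assumes Nr: "Nr \<ge> 1" and a: "a > 0" and e: "0 \<le> e" "e \<le> 1/20" and G: "G \<ge> 0"
    and PG: "P \<ge> G + (Nr/2) * Z" and Z: "Z > 0"
    and Dr1: "Dr \<le> - (a / Nr) * (1 - e) * P + a * (1 + e) * (Z + (2/3) * G / Nr)"
    and Dr2: "- (1/36) * (a / Nr) * P \<le> Dr"
    and Q: "Q \<ge> (Nr / 8) * Z^2" and PQ: "P \<ge> (3 * \<mu> / 32) * Q" and mu: "\<mu> > 0"
  shows "P + Q < cc \<mu> * Nr"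
proof -
  have P0: "P \<ge> 0" using PG G Z Nr by (smt (verit) divide_nonneg_nonneg mult_nonneg_nonneg)
  have "- (1/36) * (a / Nr) * P \<le> - (a / Nr) * (1 - e) * P + a * (1 + e) * (Z + (2/3) * G / Nr)"
    using Dr1 Dr2 by linarith
  then have "(Nr / a) * (- (1/36) * (a / Nr) * P) \<le> (Nr / a) * (- (a / Nr) * (1 - e) * P + a * (1 + e) * (Z + (2/3) * G / Nr))"
    using Nr a by (intro mult_left_mono) auto
  moreover have "(Nr / a) * (- (1/36) * (a / Nr) * P) = - (1/36) * P" using Nr a by (simp add: field_simps)
  moreover have "(Nr / a) * (- (a / Nr) * (1 - e) * P + a * (1 + e) * (Z + (2/3) * G / Nr))
     = - (1 - e) * P + (1 + e) * (Nr * Z + (2/3) * G)" using Nr a by (simp add: field_simps)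
  ultimately have 1: "- (1/36) * P \<le> - (1 - e) * P + (1 + e) * (Nr * Z + (2/3) * G)"
    by simp
  have "G \<le> P - (Nr/2) * Z" using PG by simp
  then have 2: "(1 + e) * (Nr * Z + (2/3) * G) \<le> (1 + e) * ((2/3) * P + (2/3) * Nr * Z)"
    using e by (intro mult_left_mono) auto
  have 3: "(1 + e) * ((2/3) * P + (2/3) * Nr * Z) \<le> (7/10) * (P + Nr * Z)"
  proof -
    have "0 \<le> (2/3) * P + (2/3) * Nr * Z" using P0 Nr Z by simp
    then have "(1 + e) * ((2/3) * P + (2/3) * Nr * Z) \<le> (21/20) * ((2/3) * P + (2/3) * Nr * Z)"
      using e by (intro mult_right_mono) auto
    moreover have "(21/20) * ((2/3) * P + (2/3) * Nr * Z) = (7/10) * (P + Nr * Z)" by (simp add: algebra_simps)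
    ultimately show ?thesis by linarith
  qed
  have "e * P \<le> (1/20) * P" using e P0 by (intro mult_right_mono) auto
  moreover have "- (1 - e) * P = - P + e * P" by (simp add: algebra_simps)
  ultimately have 4: "- (1 - e) * P \<le> - (19/20) * P" by linarith
  have 5: "(7/10) * (P + Nr * Z) = (7/10) * P + (7/10) * (Nr * Z)" by (simp add: algebra_simps)
  have PZ: "P \<le> (63/20) * (Nr * Z)" using 1 2 3 4 5 by linarith
  have "(3 * \<mu> / 32) * ((Nr / 8) * Z^2) \<le> (3 * \<mu> / 32) * Q" using Q mu by (intro mult_left_mono) auto
  moreover have "(3 * \<mu> / 32) * ((Nr / 8) * Z^2) = (3 * \<mu> / 256) * Nr * Z * Z" by (simp add: power2_eq_square)
  moreover have "(63/20) * (Nr * Z) = (63/20) * Nr * Z" by simp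
  ultimately have "(3 * \<mu> / 256) * Nr * Z * Z \<le> (63/20) * Nr * Z" using PQ PZ by linarith
  then have "(3 * \<mu> / 256) * Z \<le> 63/20" using Nr Z by (simp add: field_simps)
  then have Zb: "Z \<le> 63 * 256 / (60 * \<mu>)" using mu by (simp add: field_simps)
  have Pb: "P \<le> (63/20) * (63 * 256 / (60 * \<mu>)) * Nr"
  proof -
    have "(63/20) * (Nr * Z) \<le> (63/20) * (Nr * (63 * 256 / (60 * \<mu>)))"
      using Zb Nr by (intro mult_left_mono) auto
    then show ?thesis using PZ by (simp add: mult_ac)
  qed
  have Qb: "Q \<le> (32 / (3 * \<mu>)) * P" using PQ mu by (simp add: field_simps)
  have "P + Q \<le> (1 + 32 / (3 * \<mu>)) * P" using Qb by (simp add: algebra_simps)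
  also have "\<dots> \<le> (1 + 32 / (3 * \<mu>)) * ((63/20) * (63 * 256 / (60 * \<mu>)) * Nr)"
    using Pb mu by (intro mult_left_mono) auto
  also have "\<dots> < cc \<mu> * Nr"
  proof -
    have "cc \<mu> * Nr = (1 + 32 / (3 * \<mu>)) * ((63/20) * (63 * 256 / (60 * \<mu>)) * Nr) + Nr"
      unfolding cc_def by (simp only: distrib_right mult.assoc mult_1_left)
    then show ?thesis using Nr by linarith
  qed
  finally show ?thesis .
qed



lemma alloc_le: "yv n Nw w (allocate Nw w i j) \<le> yv n Nw w i \<and> yv n Nw w (allocate Nw w i j) \<le> yv n Nw w j"
  by (auto simp: allocate_def yv_def)

lemma core:
  fixes \<mu> a S lam :: real and n :: nat and Nw :: "nat \<Rightarrow> nat" and D :: "nat pmf"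
    and \<alpha> \<beta> :: real and Wd :: "real measure" and w :: "nat \<Rightarrow> real"
  assumes mu: "\<mu> > 0" and apos: "a > 0"
    and S1: "S \<ge> 1" and lam: "lam > 0" and aS: "a \<le> 1 / (20 * S)" and alam: "a \<le> lam / 2"
    and n: "n > 0" and Nw: "\<forall>i<n. Nw i > 0" and al: "\<alpha> \<ge> 1" and be: "\<beta> \<ge> 1"
    and be2: "\<beta>\<^sup>2 \<le> 4/3 - \<mu>" and bias: "biased n Nw D \<alpha> \<beta>"
    and ps: "prob_space Wd" and sWd: "sets Wd = sets borel" and nn: "AE \<omega> in Wd. \<omega> \<ge> 0"
    and iw: "integrable Wd (\<lambda>\<omega>. \<omega>)" and E1: "(\<integral>\<omega>. \<omega> \<partial>Wd) = 1"
    and ilam: "integrable Wd (\<lambda>\<omega>. exp (lam * \<omega>))"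
    and hyp: "\<forall>z. \<bar>z\<bar> < lam / 2 \<longrightarrow> deriv (deriv (mgf Wd)) z \<le> 2 * S"
    and wnn: "\<forall>i<n. w i \<ge> 0"
    and slot: "slot_entry (slot_vec n Nw w) (nat \<lceil>3 * real (total_slots n Nw) / 4\<rceil>) > 0"
    and drift: "Phi_drift a n Nw D Wd w \<ge> - (1/36) * (a / real (total_slots n Nw)) * Phi a (slot_vec n Nw w)"
  shows "Phi a (slot_vec n Nw w) < (3 * \<mu> / 32) * Psi a (slot_vec n Nw w) \<or>
          Gamma a (slot_vec n Nw w) < cc \<mu> * real (total_slots n Nw)"
proof (cases "Phi a (slot_vec n Nw w) < (3 * \<mu> / 32) * Psi a (slot_vec n Nw w)")
  case True then show ?thesis by blast
next
  case False
  note notP = False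
  interpret W: wdloc Wd lam
    using ps sWd nn ilam lam by (auto simp: wdloc_def wdloc_axioms_def)
  define N where "N = total_slots n Nw"
  define Nr where "Nr = real N"
  define xs where "xs = slot_vec n Nw w"
  define y where "y = yv n Nw w"
  have N1: "N \<ge> 1"
  proof -
    have "Nw 0 \<le> (\<Sum>i<n. Nw i)" using n by (intro member_le_sum) auto
    then show ?thesis using Nw n by (auto simp: N_def total_slots_def)
  qed
  have Nr1: "Nr \<ge> 1" using N1 by (simp add: Nr_def)
  have len: "length xs = N" by (simp add: xs_def N_def length_slot)
  have srt: "\<And>i j. i \<le> j \<Longrightarrow> j < length xs \<Longrightarrow> xs!j \<le> xs!i"
    unfolding xs_def by (rule sorted_slot)
  have lsum: "(\<Sum>j<N. f (xs!j)) = (\<Sum>i<n. real (Nw i) * f (y i))" for f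
    using sum_list_nth[of f xs] sum_slot[of f n Nw w] by (simp add: xs_def y_def length_slot N_def)
  have sum0: "(\<Sum>j<length xs. xs!j) = 0"
  proof -
    have "(\<Sum>j<N. xs!j) = (\<Sum>i<n. real (Nw i) * y i)" using lsum[of "\<lambda>x. x"] by simp
    also have "\<dots> = (\<Sum>i<n. w i - real (Nw i) * (total_load n w / Nr))"
      by (rule sum.cong) (use Nw in \<open>auto simp: y_def yv_def bin_value_def Nr_def N_def algebra_simps\<close>)
    also have "\<dots> = (\<Sum>i<n. w i) - (\<Sum>i<n. real (Nw i)) * (total_load n w / Nr)"
      by (simp only: sum_subtractf sum_distrib_right)
    also have "\<dots> = total_load n w - Nr * (total_load n w / Nr)"
      by (simp add: total_load_def Nr_def N_def total_slots_def)
    also have "\<dots> = 0" using Nr1 by simp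
    finally show ?thesis using len by simp
  qed
  define m where "m = nat \<lceil>3 * Nr / 4\<rceil>"
  define r where "r = nat \<lceil>Nr / 2\<rceil>"
  have mr: "real m = of_int \<lceil>3 * Nr / 4\<rceil>" using Nr1 unfolding m_def by (intro of_nat_nat) auto
  have rr: "real r = of_int \<lceil>Nr / 2\<rceil>" using Nr1 unfolding r_def by (intro of_nat_nat) auto
  have m1: "3 * Nr / 4 \<le> real m" "real m < 3 * Nr / 4 + 1" using ceiling_correct[of "3 * Nr / 4"] mr by auto
  have r1: "Nr / 2 \<le> real r" "real r < Nr / 2 + 1" using ceiling_correct[of "Nr / 2"] rr by auto
  have mN: "m \<le> N"
  proof -
    have "\<lceil>3 * Nr / 4\<rceil> \<le> int N" unfolding ceiling_le_iff using Nr1 by (simp add: Nr_def)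
    then show ?thesis unfolding m_def nat_le_iff .
  qed
  have rm: "r \<le> m" unfolding r_def m_def using Nr1 by (intro nat_mono ceiling_mono) auto
  have r0: "1 \<le> r" using r1 Nr1 by simp
  have slot': "xs!(m-1) > 0" using slot by (simp add: slot_entry_def xs_def m_def Nr_def N_def)
  have pos: "\<And>j. j < m \<Longrightarrow> xs!j > 0"
  proof -
    fix j assume "j < m"
    then have "xs!(m-1) \<le> xs!j" using srt[of j "m-1"] mN len r0 rm by auto
    then show "xs!j > 0" using slot' by simp
  qed
  have mlt: "m < N"
  proof (rule ccontr)
    assume "\<not> m < N"
    then have "m = N" using mN by simp
    then have "(\<Sum>j<length xs. xs!j) > 0" using pos len N1 by (intro sum_pos) (auto simp: lessThan_empty_iff)
    then show False using sum0 by simp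
  qed
  define k where "k = N - m"
  have kr: "2 * (length xs - m) \<le> r"
  proof -
    have "real (2 * (N - m)) = 2 * (Nr - real m)" using mN by (simp add: Nr_def of_nat_diff)
    also have "\<dots> \<le> real r" using m1 r1 by (simp add: field_simps)
    finally show ?thesis using len by (simp only: of_nat_le_iff)
  qed
  have kN: "real k \<ge> Nr / 8"
  proof -
    have k1: "real k \<ge> 1" using mlt by (simp add: k_def)
    have "real k = Nr - real m" using mN by (simp add: k_def Nr_def of_nat_diff)
    then show ?thesis using k1 m1 by (cases "Nr \<ge> 8") linarith+
  qed
  define z2 where "z2 = xs!(r-1)"
  have z2pos: "z2 > 0" using pos[of "r-1"] r0 rm by (simp add: z2_def)
  define Z where "Z = exp (a * z2)"
  have Zpos: "Z > 0" by (simp add: Z_def)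
  define g where "g = (\<lambda>x. max 0 (exp (a * x) - Z))"
  define cn where "cn = (\<lambda>x. if x > z2 then 1 else (0::real))"
  define G where "G = (\<Sum>j<N. g (xs!j))"
  define C where "C = (\<Sum>j<N. cn (xs!j))"
  have G0: "G \<ge> 0" by (simp add: G_def g_def sum_nonneg)
  have Cb: "C \<le> real (r - 1)"
    using cnt_bound[OF srt r0] rm mN len by (simp add: C_def cn_def z2_def)
  have Cb2: "C \<le> Nr / 2"
  proof -
    have "real (r - 1) = real r - 1" using r0 by (simp add: of_nat_diff)
    then show ?thesis using Cb r1 by linarith
  qed
  define Ph where "Ph = Phi a xs"
  define Ps where "Ps = Psi a xs"
  have Ph_eq: "Ph = (\<Sum>j<N. exp (a * xs!j))" unfolding Ph_def Phi_def sum_list_nth len ..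
  have Ps_eq: "Ps = (\<Sum>j<N. exp (- a * xs!j))" unfolding Ps_def Psi_def sum_list_nth len ..
  have PG: "Ph \<ge> G + (Nr / 2) * Z"
  proof -
    have "Ph \<ge> G + real r * Z"
      using phi_split[OF srt r0, of a] rm mN len apos by (simp add: Ph_eq G_def g_def Z_def z2_def)
    moreover have "(Nr / 2) * Z \<le> real r * Z" using r1 Zpos by (intro mult_right_mono) auto
    ultimately show ?thesis by linarith
  qed
  have PsB: "Ps \<ge> (Nr / 8) * Z^2"
  proof -
    have "Ps \<ge> real (length xs - m) * exp (2 * a * xs!(r-1))"
      using psi_bound[OF srt r0 rm _ kr pos sum0 apos] mlt len z2pos by (simp add: Ps_eq z2_def)
    moreover have "exp (2 * a * xs!(r-1)) = Z^2"
      by (simp add: Z_def z2_def power2_eq_square exp_add[symmetric])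
    moreover have "(Nr / 8) * Z^2 \<le> real k * Z^2" using kN by (intro mult_right_mono) auto
    ultimately show ?thesis using len by (simp add: k_def)
  qed
  have Dsub: "set_pmf D \<subseteq> {..<n}" using bias by (simp add: biased_def)
  have Dsum: "(\<Sum>i<n. pmf D i) = 1" using Dsub by (intro sum_pmf_eq_1) auto
  have Dup: "\<And>i. i < n \<Longrightarrow> pmf D i \<le> \<beta> * real (Nw i) / Nr"
    using bias by (simp add: biased_def Nr_def N_def)
  define e where "e = S * a"
  have e: "0 \<le> e" "e \<le> 1/20"
  proof -
    show "0 \<le> e" using S1 apos by (simp add: e_def)
    have "S * a \<le> S * (1 / (20 * S))" using aS S1 by (intro mult_left_mono) auto
    then show "e \<le> 1/20" using S1 by (simp add: e_def)
  qed
  define A where "A = - (a / Nr) * (1 - e) * Ph"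
  define B where "B = a * (1 + e)"
  have B0: "B \<ge> 0" using apos e by (simp add: B_def)
  have inner: "(\<integral>\<omega>. Phi a (slot_vec n Nw (add_ball w (allocate Nw w i j) \<omega>)) - Phi a (slot_vec n Nw w) \<partial>Wd)
      \<le> A + B * (Z + g (y i) * cn (y j))" if ij: "i < n" "j < n" for i j
  proof -
    define kk where "kk = allocate Nw w i j"
    have kk: "kk < n" using ij by (simp add: kk_def allocate_def)
    have "(\<integral>\<omega>. Phi a (slot_vec n Nw (add_ball w kk \<omega>)) - Phi a (slot_vec n Nw w) \<partial>Wd)
        \<le> A + B * exp (a * y kk)"
      using W.bin_drift[OF hyp E1 apos alam kk, of Nw w] Nw kk N1 S1
      by (simp add: A_def B_def e_def Ph_def xs_def Nr_def N_def y_def)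
    moreover have "exp (a * y kk) \<le> Z + g (y i) * cn (y j)"
    proof -
      have le: "y kk \<le> y i" "y kk \<le> y j" using alloc_le by (auto simp: y_def kk_def)
      show ?thesis
      proof (cases "y j > z2")
        case True
        have h: "exp (a * y kk) \<le> exp (a * y i)" using le apos by simp
        have m: "exp (a * y i) - Z \<le> max 0 (exp (a * y i) - Z)" by (rule max.cobounded2)
        have "g (y i) * cn (y j) = max 0 (exp (a * y i) - Z)" using True by (simp add: g_def cn_def)
        then show ?thesis using h m by linarith
      next
        case False
        then have "exp (a * y kk) \<le> Z" using le apos by (simp add: Z_def)
        then show ?thesis using False by (simp add: cn_def)
      qed
    qed
    then have "B * exp (a * y kk) \<le> B * (Z + g (y i) * cn (y j))" using B0 by (intro mult_left_mono)
    ultimately show ?thesis by (simp add: kk_def)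
  qed
  have "Phi_drift a n Nw D Wd w \<le> (\<Sum>i<n. \<Sum>j<n. pmf D i * pmf D j * (A + B * (Z + g (y i) * cn (y j))))"
    unfolding Phi_drift_def
    by (intro sum_mono mult_left_mono inner) auto
  also have "\<dots> = (\<Sum>i<n. \<Sum>j<n. (A + B * Z) * (pmf D i * pmf D j) + B * ((pmf D i * g (y i)) * (pmf D j * cn (y j))))"
    by (intro sum.cong refl) (simp add: algebra_simps)
  also have "\<dots> = (A + B * Z) * (\<Sum>i<n. \<Sum>j<n. pmf D i * pmf D j) + B * (\<Sum>i<n. \<Sum>j<n. (pmf D i * g (y i)) * (pmf D j * cn (y j)))"
    by (simp add: sum.distrib sum_distrib_left)
  also have "\<dots> = (A + B * Z) * ((\<Sum>i<n. pmf D i) * (\<Sum>j<n. pmf D j)) + B * ((\<Sum>i<n. pmf D i * g (y i)) * (\<Sum>j<n. pmf D j * cn (y j)))"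
    by (simp add: sum_product)
  also have "\<dots> = A + B * Z + B * ((\<Sum>i<n. pmf D i * g (y i)) * (\<Sum>j<n. pmf D j * cn (y j)))"
    using Dsum by simp
  also have "\<dots> \<le> A + B * Z + B * ((2/3) * G / Nr)"
  proof -
    have s1: "(\<Sum>i<n. pmf D i * g (y i)) \<le> \<beta> * G / Nr"
    proof -
      have "(\<Sum>i<n. pmf D i * g (y i)) \<le> (\<Sum>i<n. \<beta> * real (Nw i) / Nr * g (y i))"
        using Dup by (intro sum_mono mult_right_mono) (auto simp: g_def)
      also have "\<dots> = \<beta> / Nr * (\<Sum>i<n. real (Nw i) * g (y i))"
        by (simp add: sum_distrib_left mult_ac)
      also have "\<dots> = \<beta> * G / Nr" using lsum[of g] by (simp add: G_def)
      finally show ?thesis .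
    qed
    have s2: "(\<Sum>j<n. pmf D j * cn (y j)) \<le> \<beta> / 2"
    proof -
      have "(\<Sum>j<n. pmf D j * cn (y j)) \<le> (\<Sum>j<n. \<beta> * real (Nw j) / Nr * cn (y j))"
        using Dup by (intro sum_mono mult_right_mono) (auto simp: cn_def)
      also have "\<dots> = \<beta> / Nr * (\<Sum>j<n. real (Nw j) * cn (y j))"
        by (simp add: sum_distrib_left mult_ac)
      also have "\<dots> = \<beta> / Nr * C" using lsum[of cn] by (simp add: C_def)
      also have "\<dots> \<le> \<beta> / Nr * (Nr / 2)" using Cb2 be Nr1 by (intro mult_left_mono) auto
      also have "\<dots> = \<beta> / 2" using Nr1 by simp
      finally show ?thesis .
    qed
    have p0: "0 \<le> (\<Sum>i<n. pmf D i * g (y i))" by (intro sum_nonneg) (auto simp: g_def)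
    have p1: "0 \<le> (\<Sum>j<n. pmf D j * cn (y j))" by (intro sum_nonneg) (auto simp: cn_def)
    have "(\<Sum>i<n. pmf D i * g (y i)) * (\<Sum>j<n. pmf D j * cn (y j)) \<le> (\<beta> * G / Nr) * (\<beta> / 2)"
      using s1 s2 p0 p1 by (intro mult_mono) auto
    also have "\<dots> = \<beta>\<^sup>2 / 2 * (G / Nr)" by (simp add: power2_eq_square field_simps)
    also have "\<dots> \<le> (2/3) * (G / Nr)"
      using be2 mu G0 Nr1 by (intro mult_right_mono) auto
    finally have "(\<Sum>i<n. pmf D i * g (y i)) * (\<Sum>j<n. pmf D j * cn (y j)) \<le> (2/3) * G / Nr" by simp
    then have "B * ((\<Sum>i<n. pmf D i * g (y i)) * (\<Sum>j<n. pmf D j * cn (y j))) \<le> B * ((2/3) * G / Nr)"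
      using B0 by (rule mult_left_mono)
    then show ?thesis by linarith
  qed
  finally have Dr1: "Phi_drift a n Nw D Wd w \<le> - (a / Nr) * (1 - e) * Ph + a * (1 + e) * (Z + (2/3) * G / Nr)"
    by (simp add: A_def B_def algebra_simps)
  have Dr2: "- (1/36) * (a / Nr) * Ph \<le> Phi_drift a n Nw D Wd w"
    using drift by (simp add: Ph_def xs_def Nr_def N_def)
  have PQ: "Ph \<ge> (3 * \<mu> / 32) * Ps" using notP by (simp add: Ph_def Ps_def xs_def)
  have "Ph + Ps < cc \<mu> * Nr"
    by (rule arith_final[OF Nr1 apos e G0 PG Zpos Dr1 Dr2 PsB PQ mu])
  then have "Gamma a (slot_vec n Nw w) < cc \<mu> * real (total_slots n Nw)"
    by (simp add: Gamma_def Ph_def Ps_def xs_def Nr_def N_def)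
  then show ?thesis by blast
qed


theorem mainTheorem13:
  fixes \<mu> :: real
  assumes "\<mu> > 0"
  shows "\<exists>a0 :: real \<Rightarrow> real. (\<forall>S\<ge>1. a0 S > 0) \<and>
    (\<forall>a::real. a > 0 \<longrightarrow> (\<exists>c::real. \<forall>(S::real) (lam::real) (n::nat) (Nw::nat \<Rightarrow> nat)
        (D::nat pmf) (\<alpha>::real) (\<beta>::real) (Wd::real measure) (w::nat \<Rightarrow> real).
      S \<ge> 1 \<and> lam > 0 \<and> a \<le> a0 S \<and> a \<le> lam / 2 \<and>
      n > 0 \<and> (\<forall>i<n. Nw i > 0) \<and>
      \<alpha> \<ge> 1 \<and> \<beta> \<ge> 1 \<and> \<beta>\<^sup>2 \<le> 4/3 - \<mu> \<and> biased n Nw D \<alpha> \<beta> \<and>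
      prob_space Wd \<and> sets Wd = sets borel \<and> (AE \<omega> in Wd. \<omega> \<ge> 0) \<and>
      integrable Wd (\<lambda>\<omega>. \<omega>) \<and> (\<integral>\<omega>. \<omega> \<partial>Wd) = 1 \<and>
      integrable Wd (\<lambda>\<omega>. exp (lam * \<omega>)) \<and>
      (\<forall>z. \<bar>z\<bar> < lam / 2 \<longrightarrow> deriv (deriv (mgf Wd)) z \<le> 2 * S) \<and>
      (\<forall>i<n. w i \<ge> 0) \<and>
      slot_entry (slot_vec n Nw w) (nat \<lceil>3 * real (total_slots n Nw) / 4\<rceil>) > 0 \<and>
      Phi_drift a n Nw D Wd w \<ge> - (1/36) * (a / real (total_slots n Nw)) * Phi a (slot_vec n Nw w)
      \<longrightarrow> Phi a (slot_vec n Nw w) < (3 * \<mu> / 32) * Psi a (slot_vec n Nw w) \<or>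
          Gamma a (slot_vec n Nw w) < c * real (total_slots n Nw)))"
  proof -
  show ?thesis
    apply (rule exI[of _ "\<lambda>S. 1 / (20 * S)"])
    apply (intro conjI allI impI)
     apply simp
    apply (rule exI[of _ "cc \<mu>"])
    apply (intro allI impI)
    apply (elim conjE)
    subgoal for a S lam n Nw D \<alpha> \<beta> Wd w
      apply (rule core[OF assms, where a=a and S=S and lam=lam and n=n and Nw=Nw and D=D and \<alpha>=\<alpha> and \<beta>=\<beta> and Wd=Wd and w=w])
                          apply assumption+
      done
    done
qed

end
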